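(* Let $(K_i)_{i\in I}$ be a family of nonempty compact Hausdorff spaces each having the regular extension property, and let $K$ be the Alexandroff compactification of their topological sum $\bigsqcup_{i\in I}K_i$. Then $K$ has the regular extension property. (That is, the class of compact Hausdorff spaces with the regular extension property is closed under taking Alexandroff compactifications of arbitrary topological sums.)
   Context: The Alexandroff compactification of a locally compact Hausdorff space $X$ is $X$ itself if $X$ is compact, and its one-point compactification $X\cup\{\infty\}$ otherwise. $C(K)$ is the Banach space of real-valued continuous functions on $K$ with the supremum norm and $\mathbf 1_K$ its unit. For a closed $F\subseteq K$, an extension operator for $F$ in $K$ is a bounded linear map $E:C(F)\to C(K)$ with $E(f)|_F=f$ for all $f$; it is regular if $\|E\|\le 1$ and $E(\mathbf 1_F)=\mathbf 1_K$. $K$ has the regular extension property if every nonempty closed subset admits a regular extension operator in $K$. *)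

theory Defs
  imports "HOL-Analysis.Analysis"
begin

text \<open>Alexandroff compactification of a topological space X, realised on the type
  'a option: Some x represents x, None is the point at infinity.\<close>

definition one_point_compactification :: "'a topology \<Rightarrow> 'a option topology" where
  "one_point_compactification X =
     topology (\<lambda>U. U \<subseteq> insert None (Some ` topspace X) \<and> openin X (Some -` U) \<and>
                   (None \<in> U \<longrightarrow> compactin X (topspace X - Some -` U)))"

definition copy_topology :: "'a topology \<Rightarrow> 'a option topology" where
  "copy_topology X = topology (\<lambda>U. U \<subseteq> Some ` topspace X \<and> openin X (Some -` U))"

definition alexandroff_compactification :: "'a topology \<Rightarrow> 'a option topology" where
  "alexandroff_compactification X =
     (if compact_space X then copy_topology X else one_point_compactification X)"

text \<open>C(F) is represented by functions continuous on the subspace F (values off F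
  are irrelevant).\<close>

definition regular_extension_operator ::
  "'a topology \<Rightarrow> 'a set \<Rightarrow> (('a \<Rightarrow> real) \<Rightarrow> ('a \<Rightarrow> real)) \<Rightarrow> bool" where
  "regular_extension_operator K F E \<longleftrightarrow>
     (\<forall>f. continuous_map (subtopology K F) euclideanreal f \<longrightarrow>
          continuous_map K euclideanreal (E f) \<and>
          (\<forall>x\<in>F. E f x = f x) \<and>
          (\<forall>x\<in>topspace K. \<bar>E f x\<bar> \<le> (SUP y\<in>F. \<bar>f y\<bar>))) \<and>
     (\<forall>f g a b. continuous_map (subtopology K F) euclideanreal f \<longrightarrow>
          continuous_map (subtopology K F) euclideanreal g \<longrightarrow>
          (\<forall>x\<in>topspace K. E (\<lambda>y. a * f y + b * g y) x = a * E f x + b * E g x)) \<and>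
     (\<forall>x\<in>topspace K. E (\<lambda>_. 1) x = 1)"

definition regular_extension_property :: "'a topology \<Rightarrow> bool" where
  "regular_extension_property K \<longleftrightarrow>
     (\<forall>F. closedin K F \<and> F \<noteq> {} \<longrightarrow> (\<exists>E. regular_extension_operator K F E))"

end

theory Submission
  imports Defs
begin

lemma istop_opc: "istopology (\<lambda>U. U \<subseteq> insert None (Some ` topspace X) \<and> openin X (Some -` U) \<and>
                   (None \<in> U \<longrightarrow> compactin X (topspace X - Some -` U)))"
  unfolding istopology_def
proof (rule conjI; intro allI impI)
  fix U V :: "'a option set"
  assume U: "U \<subseteq> insert None (Some ` topspace X) \<and> openin X (Some -` U) \<and>
                   (None \<in> U \<longrightarrow> compactin X (topspace X - Some -` U))"
    and V: "V \<subseteq> insert None (Some ` topspace X) \<and> openin X (Some -` V) \<and>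
                   (None \<in> V \<longrightarrow> compactin X (topspace X - Some -` V))"
  have e: "topspace X - (Some -` U \<inter> Some -` V) = (topspace X - Some -` U) \<union> (topspace X - Some -` V)" by auto
  show "U \<inter> V \<subseteq> insert None (Some ` topspace X) \<and> openin X (Some -` (U \<inter> V)) \<and>
                   (None \<in> U \<inter> V \<longrightarrow> compactin X (topspace X - Some -` (U \<inter> V)))"
    using U V by (auto simp: e intro: compactin_Un)
next
  fix \<K> :: "'a option set set"
  assume K: "\<forall>U\<in>\<K>. U \<subseteq> insert None (Some ` topspace X) \<and> openin X (Some -` U) \<and>
                   (None \<in> U \<longrightarrow> compactin X (topspace X - Some -` U))"
  have e: "Some -` \<Union>\<K> = \<Union> ((\<lambda>U. Some -` U) ` \<K>)" by auto
  have op: "openin X (Some -` \<Union>\<K>)" unfolding e using K by (intro openin_Union) auto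
  moreover have "compactin X (topspace X - Some -` \<Union>\<K>)" if N: "None \<in> \<Union>\<K>"
  proof -
    obtain U0 where U0: "U0 \<in> \<K>" "None \<in> U0" using N by auto
    show ?thesis
    proof (rule closed_compactin)
      show "compactin X (topspace X - Some -` U0)" using K U0 by auto
      show "topspace X - Some -` \<Union> \<K> \<subseteq> topspace X - Some -` U0" using U0 by auto
      show "closedin X (topspace X - Some -` \<Union> \<K>)" using op by (simp add: closedin_diff)
    qed
  qed
  ultimately show "\<Union>\<K> \<subseteq> insert None (Some ` topspace X) \<and> openin X (Some -` \<Union>\<K>) \<and>
                   (None \<in> \<Union>\<K> \<longrightarrow> compactin X (topspace X - Some -` \<Union>\<K>))"
    using K by auto
qed

lemma istop_copy: "istopology (\<lambda>U. U \<subseteq> Some ` topspace X \<and> openin X (Some -` U))"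
  unfolding istopology_def
proof (rule conjI; intro allI impI)
  fix U V :: "'a option set"
  assume "U \<subseteq> Some ` topspace X \<and> openin X (Some -` U)" "V \<subseteq> Some ` topspace X \<and> openin X (Some -` V)"
  then show "U \<inter> V \<subseteq> Some ` topspace X \<and> openin X (Some -` (U \<inter> V))" by (auto simp: vimage_Int)
next
  fix \<K> :: "'a option set set"
  assume K: "\<forall>U\<in>\<K>. U \<subseteq> Some ` topspace X \<and> openin X (Some -` U)"
  have e: "Some -` \<Union>\<K> = \<Union> ((\<lambda>U. Some -` U) ` \<K>)" by auto
  have "openin X (Some -` \<Union>\<K>)" unfolding e using K by (intro openin_Union) auto
  then show "\<Union>\<K> \<subseteq> Some ` topspace X \<and> openin X (Some -` \<Union>\<K>)" using K by auto
qed

definition tsK :: "'a topology \<Rightarrow> 'a option set" where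
  "tsK X = Some ` topspace X \<union> (if compact_space X then {} else {None})"

lemma openin_alex:
  "openin (alexandroff_compactification X) U \<longleftrightarrow>
    U \<subseteq> tsK X \<and> openin X (Some -` U) \<and> (None \<in> U \<longrightarrow> compactin X (topspace X - Some -` U))"
proof (cases "compact_space X")
  case True
  then show ?thesis
    by (auto simp: alexandroff_compactification_def copy_topology_def istop_copy tsK_def)
next
  case False
  then show ?thesis
    by (auto simp: alexandroff_compactification_def one_point_compactification_def istop_opc tsK_def)
qed

lemma topspace_alex: "topspace (alexandroff_compactification X) = tsK X"
proof -
  have "openin (alexandroff_compactification X) (tsK X)"
    unfolding openin_alex
  proof (intro conjI impI)
    have e: "Some -` tsK X = topspace X" by (auto simp: tsK_def)
    then show "openin X (Some -` tsK X)" by simp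
    assume "None \<in> tsK X"
    then show "compactin X (topspace X - Some -` tsK X)" by (simp add: e)
  qed simp
  then show ?thesis
    by (metis openin_alex openin_subset openin_topspace subset_antisym)
qed

lemma cont_sum:
  assumes "\<And>i. i \<in> I \<Longrightarrow> continuous_map (X i) Y (\<lambda>x. g (i,x))"
  shows "continuous_map (sum_topology X I) Y g"
  unfolding continuous_map_def
proof (intro conjI allI impI)
  show "g \<in> topspace (sum_topology X I) \<rightarrow> topspace Y"
    using assms by (force simp: continuous_map_def Pi_iff)
  fix U assume U: "openin Y U"
  show "openin (sum_topology X I) {x \<in> topspace (sum_topology X I). g x \<in> U}"
    unfolding openin_sum_topology
  proof (intro conjI ballI)
    fix i assume i: "i \<in> I"
    have "{x. (i, x) \<in> {x \<in> topspace (sum_topology X I). g x \<in> U}} = {x \<in> topspace (X i). g (i,x) \<in> U}"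
      using i by auto
    then show "openin (X i) {x. (i, x) \<in> {x \<in> topspace (sum_topology X I). g x \<in> U}}"
      using openin_continuous_map_preimage[OF assms[OF i] U] by simp
  qed auto
qed

lemma comp_compact:
  assumes "i \<in> I" "compact_space (X i)"
  shows "compactin (sum_topology X I) ({i} \<times> topspace (X i))"
proof -
  have "compactin (sum_topology X I) ((\<lambda>x. (i,x)) ` topspace (X i))"
    using image_compactin[OF _ continuous_map_component_injection[OF assms(1)]] assms(2)
    by (simp add: compact_space_def)
  moreover have "(\<lambda>x. (i,x)) ` topspace (X i) = {i} \<times> topspace (X i)" by auto
  ultimately show ?thesis by simp
qed

lemma Sigma_compact:
  assumes "finite J" "J \<subseteq> I" "\<And>i. i \<in> I \<Longrightarrow> compact_space (X i)"
  shows "compactin (sum_topology X I) (Sigma J (topspace \<circ> X))"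
proof -
  have "Sigma J (topspace \<circ> X) = \<Union> ((\<lambda>j. {j} \<times> topspace (X j)) ` J)" by auto
  moreover have "compactin (sum_topology X I) (\<Union> ((\<lambda>j. {j} \<times> topspace (X j)) ` J))"
    using assms comp_compact[of _ I X] by (intro compactin_Union) auto
  ultimately show ?thesis by simp
qed

lemma finite_cover:
  assumes "compactin (sum_topology X I) C"
  shows "\<exists>J. finite J \<and> J \<subseteq> I \<and> C \<subseteq> Sigma J (topspace \<circ> X)"
proof -
  let ?U = "(\<lambda>i. {i} \<times> topspace (X i)) ` I"
  have "\<forall>U\<in>?U. openin (sum_topology X I) U"
  proof
    fix U assume "U \<in> ?U"
    then obtain i where i: "i \<in> I" "U = {i} \<times> topspace (X i)" by auto
    have "openin (sum_topology X I) (Sigma I (\<lambda>j. if j = i then topspace (X i) else {}))"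
      by (simp add: openin_disjoint_union)
    moreover have "Sigma I (\<lambda>j. if j = i then topspace (X i) else {}) = U" using i by (auto split: if_splits)
    ultimately show "openin (sum_topology X I) U" by simp
  qed
  moreover have "C \<subseteq> \<Union>?U" using compactin_subset_topspace[OF assms] by auto
  ultimately obtain V where V: "finite V" "V \<subseteq> ?U" "C \<subseteq> \<Union>V"
    using assms unfolding compactin_def by (metis (no_types, lifting))
  then obtain J where J: "J \<subseteq> I" "finite J" "V = (\<lambda>i. {i} \<times> topspace (X i)) ` J"
    by (meson finite_subset_image)
  then show ?thesis using V by (intro exI[of _ J]) auto
qed

lemma cont_alex:
  assumes cpt: "\<And>i. i \<in> I \<Longrightarrow> compact_space (X i)"
    and c1: "continuous_map (sum_topology X I) euclideanreal (\<lambda>z. g (Some z))"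
    and c2: "None \<in> tsK (sum_topology X I) \<Longrightarrow> \<forall>e>0. \<exists>J. finite J \<and> J \<subseteq> I \<and>
                (\<forall>i\<in>I-J. \<forall>x\<in>topspace(X i). \<bar>g (Some (i,x)) - g None\<bar> < e)"
  shows "continuous_map (alexandroff_compactification (sum_topology X I)) euclideanreal g"
  unfolding continuous_map_def
proof (intro conjI allI impI)
  show "g \<in> topspace (alexandroff_compactification (sum_topology X I)) \<rightarrow> topspace euclideanreal"
    by simp
  fix U :: "real set" assume U: "openin euclideanreal U"
  let ?S = "sum_topology X I"
  let ?P = "{x \<in> topspace (alexandroff_compactification ?S). g x \<in> U}"
  have e1: "Some -` ?P = {z \<in> topspace ?S. g (Some z) \<in> U}"
    by (auto simp: topspace_alex tsK_def)
  have o1: "openin ?S (Some -` ?P)" unfolding e1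
    using openin_continuous_map_preimage[OF c1 U] .
  show "openin (alexandroff_compactification ?S) ?P"
    unfolding openin_alex
  proof (intro conjI impI)
    show "?P \<subseteq> tsK ?S" by (auto simp: topspace_alex)
    show "openin ?S (Some -` ?P)" by (rule o1)
    assume N: "None \<in> ?P"
    then have "g None \<in> U" "None \<in> tsK ?S" by (auto simp: topspace_alex)
    then obtain e where e: "e > 0" "ball (g None) e \<subseteq> U"
      using U by (meson open_contains_ball open_openin)
    obtain J where J: "finite J" "J \<subseteq> I"
      "\<forall>i\<in>I-J. \<forall>x\<in>topspace(X i). \<bar>g (Some (i,x)) - g None\<bar> < e"
      using c2[OF \<open>None \<in> tsK ?S\<close>] e(1) by blast
    show "compactin ?S (topspace ?S - Some -` ?P)"
    proof (rule closed_compactin)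
      show "compactin ?S (Sigma J (topspace \<circ> X))" using Sigma_compact[OF J(1,2) cpt] .
      show "topspace ?S - Some -` ?P \<subseteq> Sigma J (topspace \<circ> X)"
      proof
        fix z assume z: "z \<in> topspace ?S - Some -` ?P"
        obtain i x where zi: "z = (i,x)" by fastforce
        have ix: "i \<in> I" "x \<in> topspace (X i)" "g (Some z) \<notin> U" using z zi e1 by auto
        have "i \<in> J"
        proof (rule ccontr)
          assume "i \<notin> J"
          then have "\<bar>g (Some (i,x)) - g None\<bar> < e" using J(3) ix by auto
          then have "g (Some z) \<in> ball (g None) e" using zi by (simp add: dist_real_def abs_minus_commute)
          then show False using e(2) ix(3) by auto
        qed
        then show "z \<in> Sigma J (topspace \<circ> X)" using zi ix by auto
      qed
      show "closedin ?S (topspace ?S - Some -` ?P)" using o1 closedin_topspace[of ?S] by (intro closedin_diff) auto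
    qed
  qed
qed

lemma cont_inj:
  assumes "i \<in> I"
  shows "continuous_map (X i) (alexandroff_compactification (sum_topology X I)) (\<lambda>x. Some (i,x))"
  unfolding continuous_map_def
proof (intro conjI allI impI)
  show "(\<lambda>x. Some (i, x)) \<in> topspace (X i) \<rightarrow> topspace (alexandroff_compactification (sum_topology X I))"
    using assms by (auto simp: topspace_alex tsK_def)
  fix U assume "openin (alexandroff_compactification (sum_topology X I)) U"
  then have "openin (sum_topology X I) (Some -` U)" by (simp add: openin_alex)
  then have "openin (X i) {x. (i,x) \<in> Some -` U}" using assms by (simp add: openin_sum_topology)
  moreover have "{x \<in> topspace (X i). Some (i, x) \<in> U} = {x. (i,x) \<in> Some -` U}"
    using \<open>openin (sum_topology X I) (Some -` U)\<close> openin_subset assms by fastforce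
  ultimately show "openin (X i) {x \<in> topspace (X i). Some (i, x) \<in> U}" by simp
qed

lemma reo_ext:
  assumes "regular_extension_operator K F E" "continuous_map (subtopology K F) euclideanreal f"
  shows "continuous_map K euclideanreal (E f)" "\<And>x. x \<in> F \<Longrightarrow> E f x = f x"
    "\<And>x. x \<in> topspace K \<Longrightarrow> \<bar>E f x\<bar> \<le> (SUP y\<in>F. \<bar>f y\<bar>)"
  using assms unfolding regular_extension_operator_def by blast+

lemma reo_lin:
  assumes "regular_extension_operator K F E" "continuous_map (subtopology K F) euclideanreal f"
    "continuous_map (subtopology K F) euclideanreal g" "x \<in> topspace K"
  shows "E (\<lambda>y. a * f y + b * g y) x = a * E f x + b * E g x"
  using assms unfolding regular_extension_operator_def by blast

lemma reo_one:
  assumes "regular_extension_operator K F E" "x \<in> topspace K"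
  shows "E (\<lambda>_. 1) x = 1"
  using assms unfolding regular_extension_operator_def by blast

theorem proposition3p12:
  fixes X :: "'i \<Rightarrow> 'a topology" and I :: "'i set"
  assumes "\<And>i. i \<in> I \<Longrightarrow> compact_space (X i)"
    and "\<And>i. i \<in> I \<Longrightarrow> Hausdorff_space (X i)"
    and "\<And>i. i \<in> I \<Longrightarrow> topspace (X i) \<noteq> {}"
    and "\<And>i. i \<in> I \<Longrightarrow> regular_extension_property (X i)"
  shows "regular_extension_property (alexandroff_compactification (sum_topology X I))"
  unfolding regular_extension_property_def
proof (intro allI impI)
  let ?S = "sum_topology X I"
  let ?K = "alexandroff_compactification ?S"
  note cpt = assms(1)
  fix F assume "closedin ?K F \<and> F \<noteq> {}"
  then have Fc: "closedin ?K F" and Fne: "F \<noteq> {}" by auto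
  have Fsub: "F \<subseteq> tsK ?S" using closedin_subset[OF Fc] by (simp add: topspace_alex)
  define Fi where "Fi i = {x. Some (i,x) \<in> F}" for i
  have inF: "i \<in> I \<and> x \<in> topspace (X i)" if "Some (i,x) \<in> F" for i x
    using subsetD[OF Fsub that] by (auto simp: tsK_def split: if_splits)
  have Fi_closed: "closedin (X i) (Fi i)" if i: "i \<in> I" for i
  proof -
    have "{x \<in> topspace (X i). Some (i,x) \<in> F} = Fi i" using inF by (auto simp: Fi_def)
    then show ?thesis using closedin_continuous_map_preimage[OF cont_inj[OF i] Fc] by simp
  qed
  have "\<forall>i. \<exists>E. i \<in> I \<and> Fi i \<noteq> {} \<longrightarrow> regular_extension_operator (X i) (Fi i) E"
  proof
    fix i show "\<exists>E. i \<in> I \<and> Fi i \<noteq> {} \<longrightarrow> regular_extension_operator (X i) (Fi i) E"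
    proof (cases "i \<in> I \<and> Fi i \<noteq> {}")
      case True
      then show ?thesis using assms(4)[of i] Fi_closed[of i] unfolding regular_extension_property_def by auto
    qed auto
  qed
  then obtain Ei where Ei: "\<And>i. i \<in> I \<Longrightarrow> Fi i \<noteq> {} \<Longrightarrow> regular_extension_operator (X i) (Fi i) (Ei i)"
    by metis
  obtain p0 where p0: "p0 \<in> F" "None \<in> F \<Longrightarrow> p0 = None" using Fne by (cases "None \<in> F") auto
  define E where "E f z = (case z of None \<Rightarrow> f p0 | Some (i,x) \<Rightarrow>
        (if Fi i \<noteq> {} then Ei i (\<lambda>y. f (Some (i,y))) x else f p0))" for f :: "('i \<times> 'a) option \<Rightarrow> real" and z
  have fi_cont: "continuous_map (subtopology (X i) (Fi i)) euclideanreal (\<lambda>y. f (Some (i,y)))"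
    if cf: "continuous_map (subtopology ?K F) euclideanreal f" and i: "i \<in> I" for f i
  proof -
    have "continuous_map (subtopology (X i) (Fi i)) (subtopology ?K F) (\<lambda>y. Some (i,y))"
      using cont_inj[OF i] by (intro continuous_map_into_subtopology continuous_map_from_subtopology)
        (auto simp: Fi_def)
    then show ?thesis using continuous_map_compose[OF _ cf] by (simp add: o_def)
  qed
  have FIN: "\<exists>J. finite J \<and> J \<subseteq> I \<and> (\<forall>i\<in>I-J. \<forall>x\<in>Fi i. \<bar>f (Some (i,x)) - f p0\<bar> < e)"
    if cf: "continuous_map (subtopology ?K F) euclideanreal f" and e: "e > 0" for f e
  proof (cases "None \<in> F")
    case True
    then have pN: "p0 = None" using p0 by auto
    have "openin (subtopology ?K F) {x \<in> topspace (subtopology ?K F). f x \<in> ball (f None) e}"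
      by (rule openin_continuous_map_preimage[OF cf]) simp
    then have "\<exists>T. openin ?K T \<and> {x \<in> topspace (subtopology ?K F). f x \<in> ball (f None) e} = T \<inter> F"
      by (simp only: openin_subtopology)
    then obtain U where U: "openin ?K U"
      "{x \<in> topspace (subtopology ?K F). f x \<in> ball (f None) e} = U \<inter> F"
      apply (elim exE conjE) apply (rule that) apply assumption+ done
    have "None \<in> topspace ?K" using True closedin_subset[OF Fc] by blast
    then have "None \<in> {x \<in> topspace (subtopology ?K F). f x \<in> ball (f None) e}"
      using True e by simp
    then have NU: "None \<in> U" using U(2) by blast
    have cptU: "compactin ?S (topspace ?S - Some -` U)" using U(1)[unfolded openin_alex] NU by (elim conjE) (erule mp)
    obtain J where J: "finite J" "J \<subseteq> I" "topspace ?S - Some -` U \<subseteq> Sigma J (topspace \<circ> X)"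
      using finite_cover[OF cptU] by blast
    show ?thesis
    proof (intro exI[of _ J] conjI ballI)
      fix i x assume i: "i \<in> I - J" and x: "x \<in> Fi i"
      then have "Some (i,x) \<in> F" by (simp add: Fi_def)
      then have "(i,x) \<in> topspace ?S" using inF by auto
      moreover have "(i,x) \<notin> Sigma J (topspace \<circ> X)" using i by auto
      ultimately have "(i,x) \<notin> topspace ?S - Some -` U" using J(3) by blast
      then have "Some (i,x) \<in> U" using \<open>(i,x) \<in> topspace ?S\<close> by simp
      then have "Some (i,x) \<in> {x \<in> topspace (subtopology ?K F). f x \<in> ball (f None) e}"
        using U(2) \<open>Some (i,x) \<in> F\<close> by auto
      then show "\<bar>f (Some (i,x)) - f p0\<bar> < e" by (simp add: pN dist_real_def abs_minus_commute)
    qed (use J in auto)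
  next
    case False
    have eq: "Some -` F = topspace ?S - Some -` (tsK ?S - F)" using Fsub by (auto simp: tsK_def)
    have op: "openin ?K (tsK ?S - F)" using Fc by (simp add: closedin_def topspace_alex)
    have "compactin ?S (Some -` F)"
    proof (cases "compact_space ?S")
      case True
      have "closedin ?S (Some -` F)" unfolding eq
        using op closedin_topspace[of ?S] by (intro closedin_diff) (auto simp: openin_alex)
      then show ?thesis using True closedin_compact_space by blast
    next
      case False
      then have "None \<in> tsK ?S - F" using \<open>None \<notin> F\<close> by (simp add: tsK_def)
      then show ?thesis unfolding eq using op by (simp add: openin_alex)
    qed
    then have cptF: "compactin ?S (Some -` F)" .
    obtain J where J: "finite J" "J \<subseteq> I" "Some -` F \<subseteq> Sigma J (topspace \<circ> X)"
      using finite_cover[OF cptF] by blast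
    show ?thesis
    proof (intro exI[of _ J] conjI ballI)
      fix i x assume i: "i \<in> I - J" and x: "x \<in> Fi i"
      then have "(i,x) \<in> Some -` F" by (simp add: Fi_def)
      then show "\<bar>f (Some (i,x)) - f p0\<bar> < e" using J(3) i by auto
    qed (use J in auto)
  qed
  have BND: "\<exists>B. \<forall>z\<in>F. \<bar>f z\<bar> \<le> B"
    if cf: "continuous_map (subtopology ?K F) euclideanreal f" for f
  proof -
    obtain J where J: "finite J" "J \<subseteq> I" "\<forall>i\<in>I-J. \<forall>x\<in>Fi i. \<bar>f (Some (i,x)) - f p0\<bar> < 1"
      using FIN[OF cf, of 1] by auto
    have "\<exists>B. \<forall>x\<in>Fi j. \<bar>f (Some (j,x))\<bar> \<le> B" if j: "j \<in> J" for j
    proof -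
      have jI: "j \<in> I" using j J by auto
      have cs: "compact_space (subtopology (X j) (Fi j))"
        using compact_space_subtopology[OF closedin_compact_space[OF cpt[OF jI] Fi_closed[OF jI]]] .
      have "compactin euclideanreal ((\<lambda>y. f (Some (j,y))) ` topspace (subtopology (X j) (Fi j)))"
        using image_compactin[OF cs[unfolded compact_space_def] fi_cont[OF cf jI]] .
      moreover have "topspace (subtopology (X j) (Fi j)) = Fi j"
        using closedin_subset[OF Fi_closed[OF jI]] by auto
      ultimately have "bounded ((\<lambda>y. f (Some (j,y))) ` Fi j)"
        by (simp add: compact_imp_bounded)
      then show ?thesis by (auto simp: bounded_real)
    qed
    then obtain Bj where Bj: "\<And>j x. j \<in> J \<Longrightarrow> x \<in> Fi j \<Longrightarrow> \<bar>f (Some (j,x))\<bar> \<le> Bj j" by metis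
    define B where "B = \<bar>f p0\<bar> + 1 + (\<Sum>j\<in>J. \<bar>Bj j\<bar>)"
    have "\<bar>f z\<bar> \<le> B" if z: "z \<in> F" for z
    proof (cases z)
      case None
      then have "z = p0" using p0 z by auto
      moreover have "(\<Sum>j\<in>J. \<bar>Bj j\<bar>) \<ge> 0" by (simp add: sum_nonneg)
      ultimately show ?thesis by (simp add: B_def)
    next
      case (Some w)
      obtain i x where w: "w = (i,x)" by fastforce
      have x: "x \<in> Fi i" and i: "i \<in> I" using z Some w inF by (auto simp: Fi_def)
      have s0: "(\<Sum>j\<in>J. \<bar>Bj j\<bar>) \<ge> 0" by (simp add: sum_nonneg)
      show ?thesis
      proof (cases "i \<in> J")
        case True
        have "\<bar>Bj i\<bar> \<le> (\<Sum>j\<in>J. \<bar>Bj j\<bar>)" using True J(1) by (intro member_le_sum) auto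
        moreover have "\<bar>f z\<bar> \<le> Bj i" using Bj[OF True x] Some w by simp
        ultimately show ?thesis by (simp add: B_def)
      next
        case False
        then have "\<bar>f z - f p0\<bar> < 1" using J(3) i x Some w by auto
        then show ?thesis using s0 unfolding B_def by arith
      qed
    qed
    then show ?thesis by blast
  qed
  have ext_bound: "\<bar>Ei i (\<lambda>y. f (Some (i,y))) x - c\<bar> \<le> e"
    if cf: "continuous_map (subtopology ?K F) euclideanreal f" and i: "i \<in> I" and ne: "Fi i \<noteq> {}"
      and x: "x \<in> topspace (X i)" and b: "\<forall>y\<in>Fi i. \<bar>f (Some (i,y)) - c\<bar> \<le> e" for f i x c e
  proof -
    define g where "g = (\<lambda>y. f (Some (i,y)))"
    have gc: "continuous_map (subtopology (X i) (Fi i)) euclideanreal g"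
      unfolding g_def using fi_cont[OF cf i] .
    have cc: "continuous_map (subtopology (X i) (Fi i)) euclideanreal (\<lambda>_. 1)" by simp
    have hc: "continuous_map (subtopology (X i) (Fi i)) euclideanreal (\<lambda>y. 1 * g y + (-c) * 1)"
      using gc by (intro continuous_intros) auto
    note R = Ei[OF i ne]
    have lin: "Ei i (\<lambda>y. 1 * g y + (-c) * 1) x = 1 * Ei i g x + (-c) * Ei i (\<lambda>_. 1) x"
      using reo_lin[OF R gc cc, of x 1 "-c"] x by simp
    have one: "Ei i (\<lambda>_. 1) x = 1" using reo_one[OF R] x by simp
    have nb: "\<bar>Ei i (\<lambda>y. 1 * g y + (-c) * 1) x\<bar> \<le> (SUP y\<in>Fi i. \<bar>1 * g y + (-c) * 1\<bar>)"
      using reo_ext(3)[OF R hc] x by simp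
    have "(SUP y\<in>Fi i. \<bar>1 * g y + (-c) * 1\<bar>) \<le> e"
      using ne b by (intro cSUP_least) (auto simp: g_def)
    then show ?thesis using lin one nb by (simp add: g_def)
  qed
  show "\<exists>E. regular_extension_operator ?K F E"
  proof (intro exI)
    show "regular_extension_operator ?K F E"
      unfolding regular_extension_operator_def
    proof (intro conjI allI impI ballI)
      fix f assume cf: "continuous_map (subtopology ?K F) euclideanreal f"
      show "continuous_map ?K euclideanreal (E f)"
      proof (rule cont_alex[OF cpt])
        show "continuous_map ?S euclideanreal (\<lambda>z. E f (Some z))"
        proof (rule cont_sum)
          fix i assume i: "i \<in> I"
          show "continuous_map (X i) euclideanreal (\<lambda>x. E f (Some (i, x)))"
          proof (cases "Fi i = {}")
            case True
            then show ?thesis by (simp add: E_def)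
          next
            case False
            then show ?thesis using reo_ext(1)[OF Ei[OF i False] fi_cont[OF cf i]]
              by (simp add: E_def)
          qed
        qed
        show "\<forall>e>0. \<exists>J. finite J \<and> J \<subseteq> I \<and>
                (\<forall>i\<in>I-J. \<forall>x\<in>topspace(X i). \<bar>E f (Some (i,x)) - E f None\<bar> < e)"
        proof (intro allI impI)
          fix e :: real assume e: "e > 0"
          obtain J where J: "finite J" "J \<subseteq> I" "\<forall>i\<in>I-J. \<forall>x\<in>Fi i. \<bar>f (Some (i,x)) - f p0\<bar> < e/2"
            using FIN[OF cf, of "e/2"] e by auto
          show "\<exists>J. finite J \<and> J \<subseteq> I \<and>
                (\<forall>i\<in>I-J. \<forall>x\<in>topspace(X i). \<bar>E f (Some (i,x)) - E f None\<bar> < e)"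
          proof (intro exI[of _ J] conjI ballI)
            fix i x assume i: "i \<in> I - J" and x: "x \<in> topspace (X i)"
            show "\<bar>E f (Some (i,x)) - E f None\<bar> < e"
            proof (cases "Fi i = {}")
              case True
              then show ?thesis using e by (simp add: E_def)
            next
              case False
              have "\<bar>Ei i (\<lambda>y. f (Some (i,y))) x - f p0\<bar> \<le> e/2"
                using ext_bound[OF cf _ False x, of "f p0" "e/2"] i J(3) by fastforce
              then show ?thesis using False e by (simp add: E_def)
            qed
          qed (use J in auto)
        qed
      qed
    next
      fix f z assume cf: "continuous_map (subtopology ?K F) euclideanreal f" and z: "z \<in> F"
      show "E f z = f z"
      proof (cases z)
        case None
        then show ?thesis using p0 z by (simp add: E_def)
      next
        case (Some w)
        obtain i x where w: "w = (i,x)" by fastforce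
        have x: "x \<in> Fi i" and i: "i \<in> I" using z Some w inF by (auto simp: Fi_def)
        then have ne: "Fi i \<noteq> {}" by auto
        have "Ei i (\<lambda>y. f (Some (i,y))) x = f (Some (i,x))"
          using reo_ext(2)[OF Ei[OF i ne] fi_cont[OF cf i]] x by simp
        then show ?thesis using ne Some w by (simp add: E_def)
      qed
    next
      fix f z assume cf: "continuous_map (subtopology ?K F) euclideanreal f" and z: "z \<in> topspace ?K"
      obtain B where B: "\<forall>z\<in>F. \<bar>f z\<bar> \<le> B" using BND[OF cf] by blast
      have bdd: "bdd_above ((\<lambda>y. \<bar>f y\<bar>) ` F)" using B by (auto intro: bdd_aboveI2)
      show "\<bar>E f z\<bar> \<le> (SUP y\<in>F. \<bar>f y\<bar>)"
      proof (cases z)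
        case None
        then show ?thesis using cSUP_upper[OF p0(1) bdd] by (simp add: E_def)
      next
        case (Some w)
        obtain i x where w: "w = (i,x)" by fastforce
        have i: "i \<in> I" and x: "x \<in> topspace (X i)" using z Some w by (auto simp: topspace_alex tsK_def split: if_splits)
        show ?thesis
        proof (cases "Fi i = {}")
          case True
          then show ?thesis using cSUP_upper[OF p0(1) bdd] Some w by (simp add: E_def)
        next
          case False
          have "\<bar>Ei i (\<lambda>y. f (Some (i,y))) x\<bar> \<le> (SUP y\<in>Fi i. \<bar>f (Some (i,y))\<bar>)"
            using reo_ext(3)[OF Ei[OF i False] fi_cont[OF cf i]] x by simp
          also have "\<dots> \<le> (SUP y\<in>F. \<bar>f y\<bar>)"
            using False by (intro cSUP_least cSUP_upper[OF _ bdd]) (auto simp: Fi_def)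
          finally show ?thesis using False Some w by (simp add: E_def)
        qed
      qed
    next
      fix f g a b z
      assume cf: "continuous_map (subtopology ?K F) euclideanreal f"
        and cg: "continuous_map (subtopology ?K F) euclideanreal g" and z: "z \<in> topspace ?K"
      show "E (\<lambda>y. a * f y + b * g y) z = a * E f z + b * E g z"
      proof (cases z)
        case None
        then show ?thesis by (simp add: E_def)
      next
        case (Some w)
        obtain i x where w: "w = (i,x)" by fastforce
        have i: "i \<in> I" and x: "x \<in> topspace (X i)" using z Some w by (auto simp: topspace_alex tsK_def split: if_splits)
        show ?thesis
        proof (cases "Fi i = {}")
          case True
          then show ?thesis using Some w by (simp add: E_def)
        next
          case False
          have "Ei i (\<lambda>y. a * f (Some (i,y)) + b * g (Some (i,y))) x
                = a * Ei i (\<lambda>y. f (Some (i,y))) x + b * Ei i (\<lambda>y. g (Some (i,y))) x"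
            using reo_lin[OF Ei[OF i False] fi_cont[OF cf i] fi_cont[OF cg i], of x a b] x by simp
          then show ?thesis using False Some w by (simp add: E_def)
        qed
      qed
    next
      fix z assume z: "z \<in> topspace ?K"
      show "E (\<lambda>_. 1) z = 1"
      proof (cases z)
        case None
        then show ?thesis by (simp add: E_def)
      next
        case (Some w)
        obtain i x where w: "w = (i,x)" by fastforce
        have i: "i \<in> I" and x: "x \<in> topspace (X i)" using z Some w by (auto simp: topspace_alex tsK_def split: if_splits)
        show ?thesis
        proof (cases "Fi i = {}")
          case True
          then show ?thesis using Some w by (simp add: E_def)
        next
          case False
          have "Ei i (\<lambda>_. 1) x = 1"
            using reo_one[OF Ei[OF i False]] x by simp
          then show ?thesis using False Some w by (simp add: E_def)
        qed
      qed
    qed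
  qed
qed

end
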